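(* Let $t\in\mathbb{N}$. There exists $n_0(t)$ such that for all $n\ge n_0(t)$, if $\mathcal{F},\mathcal{G}\subseteq\mathcal{M}_{2n-1}$ are $t$-cross-intersecting, then $|\mathcal{F}|\cdot|\mathcal{G}|\le\big((2(n-t)-1)!!\big)^2$.
   Context: $\mathcal{M}_{2n-1}$ is the set of near-perfect matchings of the complete graph $K_{2n-1}$ (matchings with $n-1$ edges). Families $\mathcal{F},\mathcal{G}$ are $t$-cross-intersecting if $|m\cap m'|\ge t$ for all $m\in\mathcal{F}$, $m'\in\mathcal{G}$. $(2k-1)!!=1\cdot3\cdots(2k-1)$. *)

theory Defs
  imports Main
begin

definition edges_of :: "nat set \<Rightarrow> nat set set" where
  "edges_of V = {e. e \<subseteq> V \<and> card e = 2}"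

definition is_matching :: "nat set \<Rightarrow> nat set set \<Rightarrow> bool" where
  "is_matching V m \<longleftrightarrow> m \<subseteq> edges_of V \<and>
     (\<forall>e\<in>m. \<forall>f\<in>m. e \<noteq> f \<longrightarrow> e \<inter> f = {})"

definition near_perfect_matchings :: "nat \<Rightarrow> nat set set set" where
  "near_perfect_matchings n =
     {m. is_matching {0..<2*n-1} m \<and> card m = n - 1}"

definition t_cross_intersecting :: "nat \<Rightarrow> 'a set set \<Rightarrow> 'a set set \<Rightarrow> bool" where
  "t_cross_intersecting t F G \<longleftrightarrow> (\<forall>m\<in>F. \<forall>m'\<in>G. card (m \<inter> m') \<ge> t)"

text \<open>odd_dfact k = (2k-1)!! = 1 * 3 * ... * (2k-1); odd_dfact 0 = 1 = (-1)!!.\<close>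
definition odd_dfact :: "nat \<Rightarrow> nat" where
  "odd_dfact k = (\<Prod>i<k. 2*i+1)"

end

theory Submission imports Defs Complex_Main begin

definition Nm :: "nat set \<Rightarrow> nat \<Rightarrow> nat set set set" where
  "Nm W k = {m. is_matching W m \<and> card m = k}"

lemma edges_of_finite: "finite W \<Longrightarrow> finite (edges_of W)"
  unfolding edges_of_def by (rule finite_subset[of _ "Pow W"]) auto

lemma Nm_finite: "finite W \<Longrightarrow> finite (Nm W k)"
  unfolding Nm_def is_matching_def
  by (rule finite_subset[of _ "Pow (edges_of W)"]) (auto simp: edges_of_finite)

lemma Nm_0: "finite W \<Longrightarrow> Nm W 0 = {{}}"
proof -
  assume W: "finite W"
  have "m = {}" if "is_matching W m" "card m = 0" for m
  proof -
    have "finite m" using that(1) W edges_of_finite unfolding is_matching_def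
      by (meson finite_subset)
    thus ?thesis using that by simp
  qed
  moreover have "is_matching W {}" by (simp add: is_matching_def)
  ultimately show ?thesis unfolding Nm_def by auto
qed

lemma Nm_split:
  assumes W: "finite W" and v: "v \<in> W"
  shows "Nm W (Suc k) \<subseteq> Nm (W - {v}) (Suc k) \<union>
           (\<Union>u\<in>W - {v}. insert {v,u} ` Nm (W - {v,u}) k)"
proof
  fix m assume "m \<in> Nm W (Suc k)"
  hence mm: "is_matching W m" and cm: "card m = Suc k" by (auto simp: Nm_def)
  have fm: "finite m" using mm W edges_of_finite unfolding is_matching_def
    by (meson finite_subset)
  show "m \<in> Nm (W - {v}) (Suc k) \<union> (\<Union>u\<in>W - {v}. insert {v,u} ` Nm (W - {v,u}) k)"
  proof (cases "\<exists>e\<in>m. v \<in> e")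
    case False
    have "is_matching (W - {v}) m" using mm False
      unfolding is_matching_def edges_of_def by auto
    thus ?thesis using cm by (auto simp: Nm_def)
  next
    case True
    then obtain e where e: "e \<in> m" "v \<in> e" by blast
    have "e \<in> edges_of W" using mm e unfolding is_matching_def by blast
    hence eW: "e \<subseteq> W" "card e = 2" unfolding edges_of_def by auto
    obtain x y where xy: "e = {x,y}" "x \<noteq> y" using eW(2) unfolding card_2_iff by blast
    obtain u where eu: "e = {v,u}" "u \<noteq> v"
    proof (cases "v = x")
      case True thus ?thesis using that[of y] xy by simp
    next
      case False hence "v = y" using xy e(2) by auto
      thus ?thesis using that[of x] xy by (simp add: insert_commute)
    qed
    have uW: "u \<in> W - {v}" using eW eu by auto
    let ?m' = "m - {e}"
    have "is_matching (W - {v,u}) ?m'"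
      unfolding is_matching_def
    proof (intro conjI ballI impI)
      show "?m' \<subseteq> edges_of (W - {v,u})"
      proof
        fix f assume f: "f \<in> ?m'"
        hence "f \<inter> e = {}" using mm e unfolding is_matching_def by auto
        moreover have "f \<subseteq> W" "card f = 2" using f mm unfolding is_matching_def edges_of_def by auto
        ultimately show "f \<in> edges_of (W - {v,u})" using eu unfolding edges_of_def by auto
      qed
    next
      fix f g assume "f \<in> ?m'" "g \<in> ?m'" "f \<noteq> g"
      thus "f \<inter> g = {}" using mm unfolding is_matching_def by auto
    qed
    moreover have "card ?m' = k" using cm e fm by simp
    moreover have "m = insert {v,u} ?m'" using e eu by auto
    ultimately have "m \<in> insert {v,u} ` Nm (W - {v,u}) k"
      unfolding Nm_def by (intro image_eqI[of m _ ?m']) auto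
    hence "m \<in> (\<Union>u\<in>W - {v}. insert {v,u} ` Nm (W - {v,u}) k)" using uW by (rule UN_I[rotated])
    thus ?thesis by (rule UnI2)
  qed
qed

lemma Nm_card_aux: "card W = w \<Longrightarrow> finite W \<Longrightarrow> card (Nm W k) \<le> (w choose (2*k)) * odd_dfact k"
proof (induction w arbitrary: W k rule: less_induct)
  case (less w)
  show ?case
  proof (cases k)
    case 0
    thus ?thesis using less.prems by (simp add: Nm_0 odd_dfact_def)
  next
    case (Suc k')
    show ?thesis
    proof (cases "W = {}")
      case True
      have "edges_of W = {}" using True unfolding edges_of_def by auto
      hence "Nm W k = {}"
        using Suc unfolding Nm_def is_matching_def by auto
      thus ?thesis by simp
    next
      case False
      then obtain v where v: "v \<in> W" by blast
      have "card W > 0" using v less.prems(2) by (auto simp: card_gt_0_iff)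
      then obtain w' where w': "w = Suc w'" using less.prems(1) by (cases w) auto
      have "card (Nm W k) \<le> card (Nm (W - {v}) (Suc k') \<union>
           (\<Union>u\<in>W - {v}. insert {v,u} ` Nm (W - {v,u}) k'))"
        using Nm_split[OF less.prems(2) v, of k'] Suc
        by (intro card_mono) (auto intro!: finite_UN_I Nm_finite less.prems)
      also have "\<dots> \<le> card (Nm (W - {v}) (Suc k')) + card (\<Union>u\<in>W - {v}. insert {v,u} ` Nm (W - {v,u}) k')"
        by (rule card_Un_le)
      also have "card (\<Union>u\<in>W - {v}. insert {v,u} ` Nm (W - {v,u}) k') \<le>
                 (\<Sum>u\<in>W - {v}. card (insert {v,u} ` Nm (W - {v,u}) k'))"
        by (rule card_UN_le) (use less.prems in auto)
      also have "\<dots> \<le> (\<Sum>u\<in>W - {v}. ((w'-1) choose (2*k')) * odd_dfact k')"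
      proof (rule sum_mono)
        fix u assume u: "u \<in> W - {v}"
        have "card (insert {v,u} ` Nm (W - {v,u}) k') \<le> card (Nm (W - {v,u}) k')"
          by (rule card_image_le) (use less.prems in \<open>auto intro: Nm_finite\<close>)
        also have "\<dots> \<le> (card (W - {v,u}) choose (2*k')) * odd_dfact k'"
        proof -
          have e1: "W - {v,u} = W - {v} - {u}" by auto
          have lt: "card (W - {v,u}) < w" unfolding e1 using card_Diff2_less[OF less.prems(2), of v u] u v less.prems(1) by simp
          show ?thesis by (rule less.IH[OF lt refl]) (use less.prems(2) in simp)
        qed
        also have "card (W - {v,u}) = w' - 1"
        proof -
          have "card (W - {v,u}) = card W - card {v,u}" using u v less.prems(2) by (intro card_Diff_subset) auto
          thus ?thesis using u less.prems(1) w' by simp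
        qed
        finally show "card (insert {v,u} ` Nm (W - {v,u}) k') \<le> ((w'-1) choose (2*k')) * odd_dfact k'" .
      qed
      also have "card (Nm (W - {v}) (Suc k')) \<le> (w' choose (2*Suc k')) * odd_dfact (Suc k')"
      proof -
        have cw: "card (W - {v}) = w'" using v less.prems w' by simp
        have lt: "card (W - {v}) < w" using cw w' by simp
        have "card (Nm (W - {v}) (Suc k')) \<le> (card (W - {v}) choose (2*Suc k')) * odd_dfact (Suc k')"
          by (rule less.IH[OF lt refl]) (use less.prems(2) in simp)
        thus ?thesis using cw by simp
      qed
      also have "(\<Sum>u\<in>W - {v}. ((w'-1) choose (2*k')) * odd_dfact k') = w' * (((w'-1) choose (2*k')) * odd_dfact k')"
        using v less.prems w' by simp
      finally have 1: "card (Nm W k) \<le> (w' choose (2*Suc k')) * odd_dfact (Suc k') +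
          w' * (((w'-1) choose (2*k')) * odd_dfact k')"
        using Suc by simp
      have od: "odd_dfact (Suc k') = (2*k'+1) * odd_dfact k'" by (simp add: odd_dfact_def)
      have 2: "w' * ((w'-1) choose (2*k')) = (w' choose (2*k'+1)) * (2*k'+1)"
      proof (cases w')
        case 0 thus ?thesis by simp
      next
        case (Suc w'')
        thus ?thesis using Suc_times_binomial_eq[of w'' "2*k'"] by simp
      qed
      have 4: "w' * (((w'-1) choose (2*k')) * odd_dfact k') = (w' choose (2*k'+1)) * odd_dfact (Suc k')"
      proof -
        have "w' * (((w'-1) choose (2*k')) * odd_dfact k') = (w' * ((w'-1) choose (2*k'))) * odd_dfact k'"
          by (simp only: mult.assoc)
        also have "\<dots> = ((w' choose (2*k'+1)) * (2*k'+1)) * odd_dfact k'" by (simp only: 2)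
        also have "\<dots> = (w' choose (2*k'+1)) * odd_dfact (Suc k')" by (simp only: od mult.assoc)
        finally show ?thesis .
      qed
      have 3: "(w choose (2*Suc k')) = (w' choose (2*Suc k')) + (w' choose (2*k'+1))"
      proof -
        have "(Suc w' choose Suc (2*k'+1)) = (w' choose (2*k'+1)) + (w' choose Suc (2*k'+1))"
          by (rule binomial_Suc_Suc)
        thus ?thesis using w' by simp
      qed
      have "card (Nm W k) \<le> (w' choose (2*Suc k')) * odd_dfact (Suc k') +
          (w' choose (2*k'+1)) * odd_dfact (Suc k')"
        using 1 4 by simp
      also have "\<dots> = (w choose (2*k)) * odd_dfact k" using 3 Suc by (simp add: algebra_simps)
      finally show ?thesis .
    qed
  qed
qed

lemma Nm_card: "finite W \<Longrightarrow> card (Nm W k) \<le> (card W choose (2*k)) * odd_dfact k"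
  using Nm_card_aux by blast


definition star :: "nat \<Rightarrow> nat set set \<Rightarrow> nat set set set" where
  "star n S = {m \<in> near_perfect_matchings n. S \<subseteq> m}"

lemma npm_finite: "finite (near_perfect_matchings n)"
proof -
  have "near_perfect_matchings n \<subseteq> Pow (edges_of {0..<2*n-1})"
    unfolding near_perfect_matchings_def is_matching_def by auto
  thus ?thesis by (rule finite_subset) (simp add: edges_of_finite)
qed

lemma npm_member_finite: "m \<in> near_perfect_matchings n \<Longrightarrow> finite m"
proof -
  assume "m \<in> near_perfect_matchings n"
  hence "m \<subseteq> edges_of {0..<2*n-1}" unfolding near_perfect_matchings_def is_matching_def by auto
  thus ?thesis by (rule finite_subset) (simp add: edges_of_finite)
qed

lemma npm_card: "m \<in> near_perfect_matchings n \<Longrightarrow> card m = n - 1"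
  unfolding near_perfect_matchings_def by auto

lemma star_finite: "finite (star n S)"
  unfolding star_def by (rule finite_subset[OF _ npm_finite[of n]]) auto

lemma star_mono: "X \<subseteq> Y \<Longrightarrow> star n Y \<subseteq> star n X"
  unfolding star_def by auto

lemma star_card: assumes n: "n \<ge> 1" shows "card (star n S) \<le> odd_dfact (n - card S)"
proof (cases "star n S = {}")
  case True thus ?thesis by simp
next
  case False
  then obtain m0 where m0: "m0 \<in> near_perfect_matchings n" "S \<subseteq> m0" unfolding star_def by auto
  define V where "V = {0..<2*n-1}"
  have mm0: "is_matching V m0" "card m0 = n - 1" using m0 unfolding near_perfect_matchings_def V_def by auto
  have fm0: "finite m0" using npm_member_finite[OF m0(1)] .
  have fS: "finite S" using fm0 m0(2) by (rule finite_subset[rotated])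
  define s where "s = card S"
  have sle: "s \<le> n - 1" using card_mono[OF fm0 m0(2)] mm0(2) s_def by simp
  define c where "c = n - 1 - s"
  have edge: "\<And>e. e \<in> m0 \<Longrightarrow> e \<subseteq> V \<and> card e = 2"
    using mm0(1) unfolding is_matching_def edges_of_def by auto
  have disj: "\<And>e f. e \<in> m0 \<Longrightarrow> f \<in> m0 \<Longrightarrow> e \<noteq> f \<Longrightarrow> e \<inter> f = {}"
    using mm0(1) unfolding is_matching_def by auto
  define U where "U = \<Union>S"
  have cU: "card U = 2 * s"
  proof -
    have "card U = sum card S" unfolding U_def
    proof (rule card_Union_disjoint)
      show "pairwise disjnt S" unfolding pairwise_def disjnt_def using disj m0(2) by blast
      fix A assume "A \<in> S" thus "finite A" using edge m0(2) card_ge_0_finite[of A] by fastforce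
    qed
    also have "\<dots> = sum (\<lambda>_. 2) S" using edge m0(2) by (intro sum.cong) auto
    finally show ?thesis using s_def by simp
  qed
  have UV: "U \<subseteq> V" unfolding U_def using edge m0(2) by blast
  define W where "W = V - U"
  have fV: "finite V" unfolding V_def by simp
  have cW: "card W = 2*c+1"
  proof -
    have "card W = card V - card U" unfolding W_def using UV fV by (simp add: card_Diff_subset finite_subset)
    thus ?thesis using cU V_def c_def sle n by simp
  qed
  have maps: "(\<lambda>m. m - S) ` star n S \<subseteq> Nm W c"
  proof
    fix x assume "x \<in> (\<lambda>m. m - S) ` star n S"
    then obtain m where m: "m \<in> star n S" "x = m - S" by blast
    have mnp: "m \<in> near_perfect_matchings n" and Sm: "S \<subseteq> m" using m(1) unfolding star_def by auto
    have mm: "is_matching V m" "card m = n - 1" using mnp unfolding near_perfect_matchings_def V_def by auto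
    have fm: "finite m" using npm_member_finite[OF mnp] .
    have "is_matching W x"
      unfolding is_matching_def
    proof (intro conjI ballI impI)
      show "x \<subseteq> edges_of W"
      proof
        fix f assume f: "f \<in> x"
        hence fm': "f \<in> m" "f \<notin> S" using m(2) by auto
        have "f \<in> edges_of V" using fm' mm(1) unfolding is_matching_def by auto
        hence fV': "f \<subseteq> V" "card f = 2" unfolding edges_of_def by auto
        have "\<And>e. e \<in> S \<Longrightarrow> f \<inter> e = {}"
          using mm(1) fm' Sm unfolding is_matching_def by (metis subsetD)
        hence "f \<inter> U = {}" unfolding U_def by blast
        thus "f \<in> edges_of W" using fV' unfolding edges_of_def W_def by blast
      qed
    next
      fix f g assume "f \<in> x" "g \<in> x" "f \<noteq> g"
      thus "f \<inter> g = {}" using mm(1) m(2) unfolding is_matching_def by auto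
    qed
    moreover have "card x = c"
      using m(2) Sm fm mm(2) card_Diff_subset[OF fS Sm] s_def c_def by simp
    ultimately show "x \<in> Nm W c" unfolding Nm_def by blast
  qed
  have inj: "inj_on (\<lambda>m. m - S) (star n S)"
    unfolding inj_on_def star_def by blast
  have "card (star n S) = card ((\<lambda>m. m - S) ` star n S)" using card_image[OF inj] by simp
  also have "\<dots> \<le> card (Nm W c)" using maps Nm_finite[of W c] fV W_def by (simp add: card_mono)
  also have "\<dots> \<le> (card W choose (2*c)) * odd_dfact c" by (rule Nm_card) (simp add: W_def fV)
  also have "\<dots> = (2*c+1) * odd_dfact c" using cW by simp
  also have "\<dots> = odd_dfact (Suc c)" by (simp add: odd_dfact_def)
  also have "Suc c = n - card S" using c_def s_def sle n by simp
  finally show ?thesis .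
qed


lemma branching_aux:
  fixes st :: "'a set \<Rightarrow> 'b set" and a :: "nat \<Rightarrow> nat" and AA BB :: "'a set set"
  assumes st_mono: "\<And>X Y. X \<subseteq> Y \<Longrightarrow> st Y \<subseteq> st X"
    and st_fin: "\<And>X. finite (st X)"
    and st_card: "\<And>X. card (st X) \<le> a (card X)"
    and a_step: "\<And>d. d < q \<Longrightarrow> q * a (Suc d) \<le> a d"
    and AA: "\<And>A. A \<in> AA \<Longrightarrow> finite A \<and> card A \<le> q"
    and BB: "\<And>B. B \<in> BB \<Longrightarrow> finite B \<and> card B \<le> q"
    and cross: "\<And>A B. A \<in> AA \<Longrightarrow> B \<in> BB \<Longrightarrow> t \<le> card (A \<inter> B)"
  shows "q - card X = k \<Longrightarrow> finite X \<Longrightarrow>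
    (\<forall>Y. X \<subseteq> Y \<longrightarrow> card Y < m \<longrightarrow> (\<exists>A\<in>AA. Y \<subseteq> A) \<longrightarrow> (\<exists>B\<in>BB. card (Y \<inter> B) < t)) \<Longrightarrow>
    card (\<Union>A\<in>{A\<in>AA. X \<subseteq> A}. st A) \<le> q^(m - card X) * a (max (card X) m)"
proof (induction k arbitrary: X rule: less_induct)
  case (less k)
  note fX = less.prems(2) and hyp = less.prems(3)
  let ?U = "\<lambda>X. (\<Union>A\<in>{A\<in>AA. X \<subseteq> A}. st A)"
  have finU: "finite (?U Y)" for Y
  proof -
    have "?U Y \<subseteq> st {}" using st_mono[of "{}"] by blast
    thus ?thesis using st_fin[of "{}"] by (rule finite_subset)
  qed
  show ?case
  proof (cases "{A\<in>AA. X \<subseteq> A} = {}")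
    case True
    hence "?U X = {}" by blast
    hence "card (?U X) = 0" by (simp only: card.empty)
    thus ?thesis by linarith
  next
    case False
    then obtain A0 where A0: "A0 \<in> AA" "X \<subseteq> A0" by blast
    have cXq: "card X \<le> q" using AA[OF A0(1)] A0(2) card_mono by (meson order_trans)
    show ?thesis
    proof (cases "\<forall>B\<in>BB. t \<le> card (X \<inter> B)")
      case True
      have "\<not> card X < m"
      proof
        assume "card X < m"
        then obtain B where "B \<in> BB" "card (X \<inter> B) < t" using hyp A0 by blast
        thus False using True by fastforce
      qed
      hence mc: "m \<le> card X" by simp
      have "?U X \<subseteq> st X" using st_mono by blast
      hence "card (?U X) \<le> card (st X)" using st_fin by (simp add: card_mono)
      also have "\<dots> \<le> a (card X)" by (rule st_card)
      finally show ?thesis using mc by simp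
    next
      case False
      then obtain B where B: "B \<in> BB" "card (X \<inter> B) < t" by force
      have fB: "finite B" "card B \<le> q" using BB[OF B(1)] by auto
      let ?D = "B - X"
      have hit: "\<exists>e\<in>?D. e \<in> A" if "A \<in> AA" "X \<subseteq> A" for A
      proof (rule ccontr)
        assume "\<not> (\<exists>e\<in>?D. e \<in> A)"
        hence "A \<inter> B \<subseteq> X \<inter> B" by blast
        hence "card (A \<inter> B) \<le> card (X \<inter> B)" using fX by (simp add: card_mono)
        thus False using cross[OF that(1) B(1)] B(2) by simp
      qed
      show ?thesis
      proof (cases "card X < q")
        case False
        have "{A\<in>AA. X \<subseteq> A} = {}"
        proof (rule ccontr)
          assume "{A\<in>AA. X \<subseteq> A} \<noteq> {}"
          then obtain A where A: "A \<in> AA" "X \<subseteq> A" by blast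
          have fA: "finite A" "card A \<le> q" using AA[OF A(1)] by auto
          have "card X \<le> card A" using card_mono[OF fA(1) A(2)] .
          hence "card A = card X" using fA(2) False by simp
          hence "A = X" using card_subset_eq[OF fA(1) A(2)] by simp
          thus False using hit[OF A] by blast
        qed
        hence "?U X = {}" by blast
        hence "card (?U X) = 0" by (simp only: card.empty)
        thus ?thesis by linarith
      next
        case True
        let ?c = "card X"
        have sub: "?U X \<subseteq> (\<Union>e\<in>?D. ?U (insert e X))"
        proof
          fix z assume "z \<in> ?U X"
          then obtain A where A: "A \<in> AA" "X \<subseteq> A" "z \<in> st A" by blast
          then obtain e where "e \<in> ?D" "e \<in> A" using hit by blast
          thus "z \<in> (\<Union>e\<in>?D. ?U (insert e X))" using A by blast
        qed
        have each: "card (?U (insert e X)) \<le> q^(m - Suc ?c) * a (max (Suc ?c) m)" if e: "e \<in> ?D" for e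
        proof -
          have ci: "card (insert e X) = Suc ?c" using e fX by simp
          have lt: "q - card (insert e X) < k" using ci True less.prems(1) by simp
          have hyp': "\<forall>Y. insert e X \<subseteq> Y \<longrightarrow> card Y < m \<longrightarrow> (\<exists>A\<in>AA. Y \<subseteq> A) \<longrightarrow> (\<exists>B\<in>BB. card (Y \<inter> B) < t)"
            using hyp by blast
          have "card (?U (insert e X)) \<le> q^(m - card (insert e X)) * a (max (card (insert e X)) m)"
            using less.IH[OF lt refl _ hyp'] fX by simp
          thus ?thesis using ci by simp
        qed
        have "card (?U X) \<le> card (\<Union>e\<in>?D. ?U (insert e X))"
        proof (rule card_mono[OF _ sub])
          show "finite (\<Union>e\<in>?D. ?U (insert e X))"
            by (rule finite_UN_I) (use fB in simp, rule finU)
        qed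
        also have "\<dots> \<le> (\<Sum>e\<in>?D. card (?U (insert e X)))"
          by (rule card_UN_le) (simp add: fB finU)
        also have "\<dots> \<le> (\<Sum>e\<in>?D. q^(m - Suc ?c) * a (max (Suc ?c) m))"
          by (rule sum_mono) (rule each)
        also have "\<dots> = card ?D * (q^(m - Suc ?c) * a (max (Suc ?c) m))" by simp
        also have "\<dots> \<le> q * (q^(m - Suc ?c) * a (max (Suc ?c) m))"
        proof -
          have "card ?D \<le> q" using fB card_mono[OF fB(1), of ?D] by force
          thus ?thesis by (rule mult_right_mono) simp
        qed
        also have "\<dots> \<le> q^(m - ?c) * a (max ?c m)"
        proof (cases "?c < m")
          case True
          hence "m - ?c = Suc (m - Suc ?c)" "max (Suc ?c) m = m" "max ?c m = m" by auto
          thus ?thesis by simp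
        next
          case False
          hence "m - ?c = 0" "m - Suc ?c = 0" "max (Suc ?c) m = Suc ?c" "max ?c m = ?c" by auto
          thus ?thesis using a_step[OF True] by simp
        qed
        finally show ?thesis .
      qed
    qed
  qed
qed


lemma avoid_lemma:
  fixes H :: "'a set set" and r :: nat
  assumes fH: "finite H" and ne: "H \<noteq> {}" and fD: "finite D" and cD: "card D < r"
    and sp: "\<forall>e\<in>D. r * card {h\<in>H. e \<in> h} \<le> card H"
  shows "\<exists>h\<in>H. \<forall>e\<in>D. e \<notin> h"
proof -
  let ?Bad = "\<Union>e\<in>D. {h\<in>H. e \<in> h}"
  have "card ?Bad \<le> (\<Sum>e\<in>D. card {h\<in>H. e \<in> h})"
    by (rule card_UN_le) (use fD fH in auto)
  hence "r * card ?Bad \<le> r * (\<Sum>e\<in>D. card {h\<in>H. e \<in> h})" by simp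
  also have "\<dots> = (\<Sum>e\<in>D. r * card {h\<in>H. e \<in> h})" by (simp add: sum_distrib_left)
  also have "\<dots> \<le> (\<Sum>e\<in>D. card H)" using sp by (intro sum_mono) auto
  also have "\<dots> = card D * card H" by simp
  also have "\<dots> < r * card H" using cD ne fH by (simp add: card_gt_0_iff)
  finally have "card ?Bad < card H" by simp
  hence "\<not> H \<subseteq> ?Bad"
  proof (intro notI)
    assume "card ?Bad < card H" "H \<subseteq> ?Bad"
    hence "?Bad = H" by auto
    thus False using \<open>card ?Bad < card H\<close> by simp
  qed
  then obtain h where "h \<in> H" "h \<notin> ?Bad" by blast
  thus ?thesis by blast
qed

lemma kernel_cross:
  fixes H1 H2 :: "'a set set" and r :: nat
  assumes fH1: "finite H1" and ne1: "H1 \<noteq> {}" and h1p: "\<forall>h\<in>H1. S1 \<subseteq> h \<and> finite h \<and> card h < r"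
    and sp1: "\<forall>e. e \<notin> S1 \<longrightarrow> r * card {h\<in>H1. e \<in> h} \<le> card H1"
    and fH2: "finite H2" and ne2: "H2 \<noteq> {}" and h2p: "\<forall>h\<in>H2. S2 \<subseteq> h"
    and sp2: "\<forall>e. e \<notin> S2 \<longrightarrow> r * card {h\<in>H2. e \<in> h} \<le> card H2"
    and fS: "finite S1" "finite S2" and cS: "card (S2 - S1) < r"
    and cross: "\<forall>h1\<in>H1. \<forall>h2\<in>H2. t \<le> card (h1 \<inter> h2)"
  shows "t \<le> card (S1 \<inter> S2)"
proof -
  obtain h1 where h1: "h1 \<in> H1" "\<forall>e\<in>S2 - S1. e \<notin> h1"
    using avoid_lemma[OF fH1 ne1 _ cS] fS sp1 by auto
  have fh1: "finite h1" "card h1 < r" using h1p h1(1) by auto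
  have c2: "card (h1 - S2) < r" using fh1 by (meson card_mono Diff_subset le_less_trans)
  have sp2': "\<forall>e\<in>h1 - S2. r * card {h\<in>H2. e \<in> h} \<le> card H2" using sp2 by auto
  obtain h2 where h2: "h2 \<in> H2" "\<forall>e\<in>h1 - S2. e \<notin> h2"
    using avoid_lemma[OF fH2 ne2 _ c2 sp2'] fh1 by auto
  have "h1 \<inter> h2 \<subseteq> S1 \<inter> S2" using h1(2) h2(2) by blast
  hence "card (h1 \<inter> h2) \<le> card (S1 \<inter> S2)" using fS by (simp add: card_mono)
  thus ?thesis using cross h1(1) h2(1) by (meson order_trans)
qed

definition spread_ok :: "nat \<Rightarrow> nat set set \<Rightarrow> nat set set set \<Rightarrow> nat set set set \<Rightarrow> bool" where
  "spread_ok r S F H \<longleftrightarrow> H \<noteq> {} \<and> H \<subseteq> F \<and> (\<forall>h\<in>H. S \<subseteq> h) \<and>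
     (\<forall>e. e \<notin> S \<longrightarrow> r * card {h\<in>H. e \<in> h} \<le> card H)"

lemma decomp_aux:
  assumes n: "n \<ge> 1" and r: "r > 0"
  shows "card F = k \<Longrightarrow> F \<subseteq> near_perfect_matchings n \<Longrightarrow> \<exists>K R. R \<subseteq> F \<and> card R \<le> r^q * odd_dfact (n - q) \<and>
     F \<subseteq> R \<union> (\<Union>S\<in>K. star n S) \<and> (\<forall>S\<in>K. card S < q \<and> finite S \<and> (\<exists>H. spread_ok r S F H))"
proof (induction k arbitrary: F rule: less_induct)
  case (less k)
  note FM = less.prems(2)
  have fF: "finite F" using FM npm_finite finite_subset by blast
  define E where "E = edges_of {0..<2*n-1}"
  have fE: "finite E" unfolding E_def by (simp add: edges_of_finite)
  have mE: "\<And>m. m \<in> near_perfect_matchings n \<Longrightarrow> m \<subseteq> E"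
    unfolding E_def near_perfect_matchings_def is_matching_def by auto
  show ?case
  proof (cases "F = {}")
    case True thus ?thesis by (intro exI[of _ "{}"]) auto
  next
    case False
    define w where "w = (\<lambda>S. r^(card S) * card {f\<in>F. S \<subseteq> f})"
    define C where "C = {S. S \<subseteq> E \<and> card S \<le> q}"
    have fC: "finite C" unfolding C_def using fE by simp
    have eC: "{} \<in> C" unfolding C_def by simp
    define mx where "mx = Max (w ` C)"
    have "mx \<in> w ` C" unfolding mx_def using fC eC by (intro Max_in) auto
    then obtain S where S: "S \<in> C" "w S = mx" by blast
    have Smax: "\<And>S'. S' \<in> C \<Longrightarrow> w S' \<le> w S" unfolding S(2) mx_def using fC by simp
    define FS where "FS = {f\<in>F. S \<subseteq> f}"
    have w0: "w {} = card F" unfolding w_def by simp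
    have "card F \<le> w S" using Smax[OF eC] w0 by simp
    moreover have "card F > 0" using False fF by (simp add: card_gt_0_iff)
    ultimately have wpos: "w S > 0" by linarith
    hence "card FS > 0" unfolding w_def FS_def by simp
    hence FSne: "FS \<noteq> {}" by auto
    have fS: "finite S" using S(1) fE unfolding C_def by (auto intro: finite_subset)
    have FSstar: "FS \<subseteq> star n S" unfolding FS_def star_def using FM by auto
    have cFS: "card FS \<le> odd_dfact (n - card S)"
      using card_mono[OF star_finite FSstar] star_card[OF n, of S] by simp
    show ?thesis
    proof (cases "card S < q")
      case False
      hence cSq: "card S = q" using S(1) unfolding C_def by simp
      have "card F \<le> r^q * card FS" using \<open>card F \<le> w S\<close> cSq unfolding w_def FS_def by simp
      also have "\<dots> \<le> r^q * odd_dfact (n - q)" using cFS cSq by simp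
      finally show ?thesis by (intro exI[of _ "{}"] exI[of _ F]) auto
    next
      case True
      define F' where "F' = F - FS"
      have "FS \<subseteq> F" unfolding FS_def by auto
      have fFS: "finite FS" using \<open>FS \<subseteq> F\<close> fF by (rule finite_subset)
      have "card F' = card F - card FS" unfolding F'_def using card_Diff_subset[OF fFS \<open>FS \<subseteq> F\<close>] .
      moreover have "card FS \<le> card F" using \<open>FS \<subseteq> F\<close> fF by (simp add: card_mono)
      ultimately have "card F' < card F" using \<open>card FS > 0\<close> by linarith
      hence "card F' < k" using less.prems(1) by simp
      moreover have "F' \<subseteq> near_perfect_matchings n" using FM unfolding F'_def by auto
      obtain K R where KR: "R \<subseteq> F'" "card R \<le> r^q * odd_dfact (n - q)"
        "F' \<subseteq> R \<union> (\<Union>S\<in>K. star n S)" "\<forall>S\<in>K. card S < q \<and> finite S \<and> (\<exists>H. spread_ok r S F' H)"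
        using less.IH[OF \<open>card F' < k\<close> refl \<open>F' \<subseteq> near_perfect_matchings n\<close>] by blast
      have spS: "spread_ok r S F FS"
        unfolding spread_ok_def
      proof (intro conjI allI impI)
        show "FS \<noteq> {}" by (rule FSne)
        show "FS \<subseteq> F" by fact
        show "\<forall>h\<in>FS. S \<subseteq> h" unfolding FS_def by auto
      next
        fix e assume e: "e \<notin> S"
        show "r * card {h\<in>FS. e \<in> h} \<le> card FS"
        proof (cases "e \<in> E")
          case False
          have "{h\<in>FS. e \<in> h} = {}"
          proof (rule ccontr)
            assume "{h\<in>FS. e \<in> h} \<noteq> {}"
            then obtain h where "h \<in> F" "e \<in> h" unfolding FS_def by blast
            thus False using False mE FM by blast
          qed
          hence "card {h\<in>FS. e \<in> h} = 0" by (simp only: card.empty)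
          thus ?thesis by simp
        next
          case True
          have "insert e S \<in> C" using True S(1) e fS \<open>card S < q\<close> unfolding C_def by auto
          hence le: "w (insert e S) \<le> w S" by (rule Smax)
          have eq: "{h\<in>FS. e \<in> h} = {f\<in>F. insert e S \<subseteq> f}" unfolding FS_def by auto
          have "r^(card S) * (r * card {h\<in>FS. e \<in> h}) \<le> r^(card S) * card FS"
            using le e fS unfolding w_def eq FS_def by (simp add: ac_simps)
          thus ?thesis using r by simp
        qed
      qed
      have spmono: "spread_ok r S' F H" if "spread_ok r S' F' H" for S' H
        using that unfolding spread_ok_def F'_def by auto
      have r1: "R \<subseteq> F" using KR(1) unfolding F'_def by auto
      have r3: "F \<subseteq> R \<union> (\<Union>S\<in>insert S K. star n S)"
        proof
          fix f assume f: "f \<in> F"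
          show "f \<in> R \<union> (\<Union>S\<in>insert S K. star n S)"
          proof (cases "f \<in> FS")
            case True thus ?thesis using FSstar by blast
          next
            case False thus ?thesis using f KR(3) unfolding F'_def by blast
          qed
        qed
      have r4: "\<forall>S'\<in>insert S K. card S' < q \<and> finite S' \<and> (\<exists>H. spread_ok r S' F H)"
      proof
        fix S' assume "S' \<in> insert S K"
        thus "card S' < q \<and> finite S' \<and> (\<exists>H. spread_ok r S' F H)"
        proof
          assume "S' = S" thus ?thesis using spS True fS by blast
        next
          assume "S' \<in> K"
          then obtain H where "card S' < q" "finite S'" "spread_ok r S' F' H" using KR(4) by blast
          thus ?thesis using spmono by blast
        qed
      qed
      show ?thesis using r1 KR(2) r3 r4 by blast
    qed
  qed
qed


lemma branching:
  fixes st :: "'a set \<Rightarrow> 'b set" and a :: "nat \<Rightarrow> nat" and AA BB :: "'a set set"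
  assumes "\<And>X Y. X \<subseteq> Y \<Longrightarrow> st Y \<subseteq> st X"
    and "\<And>X. finite (st X)"
    and "\<And>X. card (st X) \<le> a (card X)"
    and "\<And>d. d < q \<Longrightarrow> q * a (Suc d) \<le> a d"
    and "\<And>A. A \<in> AA \<Longrightarrow> finite A \<and> card A \<le> q"
    and "\<And>B. B \<in> BB \<Longrightarrow> finite B \<and> card B \<le> q"
    and "\<And>A B. A \<in> AA \<Longrightarrow> B \<in> BB \<Longrightarrow> t \<le> card (A \<inter> B)"
    and "finite X"
    and "\<forall>Y. X \<subseteq> Y \<longrightarrow> card Y < m \<longrightarrow> (\<exists>A\<in>AA. Y \<subseteq> A) \<longrightarrow> (\<exists>B\<in>BB. card (Y \<inter> B) < t)"
  shows "card (\<Union>A\<in>{A\<in>AA. X \<subseteq> A}. st A) \<le> q^(m - card X) * a (max (card X) m)"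
  using branching_aux[OF assms(1-7) refl assms(8,9)] .

lemma gen_bound:
  assumes n: "n \<ge> 1" and FM: "F \<subseteq> near_perfect_matchings n" and g0: "g0 \<in> near_perfect_matchings n"
    and cr: "\<forall>f\<in>F. t \<le> card (f \<inter> g0)"
  shows "card F \<le> n^t * odd_dfact (n - t)"
proof -
  let ?Ts = "{T. T \<subseteq> g0 \<and> card T = t}"
  have fg0: "finite g0" using npm_member_finite[OF g0] .
  have cg0: "card g0 = n - 1" using npm_card[OF g0] .
  have "F \<subseteq> (\<Union>T\<in>?Ts. star n T)"
  proof
    fix f assume f: "f \<in> F"
    have "t \<le> card (f \<inter> g0)" using cr f by blast
    then obtain T where T: "T \<subseteq> f \<inter> g0" "card T = t"
      using obtain_subset_with_card_n by metis
    hence "f \<in> star n T" using f FM unfolding star_def by auto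
    thus "f \<in> (\<Union>T\<in>?Ts. star n T)" using T by blast
  qed
  hence "card F \<le> card (\<Union>T\<in>?Ts. star n T)"
    by (rule card_mono[rotated]) (auto intro!: finite_UN_I star_finite simp: fg0)
  also have "\<dots> \<le> (\<Sum>T\<in>?Ts. card (star n T))"
    by (rule card_UN_le) (simp add: fg0)
  also have "\<dots> \<le> (\<Sum>T\<in>?Ts. odd_dfact (n - t))"
    by (rule sum_mono) (use star_card[OF n] in auto)
  also have "\<dots> = ((n-1) choose t) * odd_dfact (n - t)"
    using n_subsets[OF fg0, of t] cg0 by simp
  also have "\<dots> \<le> n^t * odd_dfact (n - t)"
  proof -
    have "((n-1) choose t) \<le> n^t"
    proof (cases "t \<le> n - 1")
      case True
      hence "((n-1) choose t) \<le> (n-1)^t" by (rule binomial_le_pow)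
      also have "\<dots> \<le> n^t" by (rule power_mono) auto
      finally show ?thesis .
    next
      case False thus ?thesis by (simp add: binomial_eq_0)
    qed
    thus ?thesis by (rule mult_right_mono) simp
  qed
  finally show ?thesis .
qed

lemma aux_ineq: "t + 2 \<le> (i::nat) \<Longrightarrow> (2*i+2)*(i+1+t) \<le> (2*i+1)^2"
proof -
  assume h: "t+2 \<le> i"
  have "i*(t+2) \<le> i*i" by (rule mult_le_mono2[OF h])
  hence f: "i*t + 2*i \<le> i*i" by (simp add: algebra_simps)
  have eq1: "(2*i+2)*(i+1+t) = 2*(i*i) + 2*(i*t) + 4*i + 2*t + 2" by (simp add: algebra_simps)
  have eq2: "(2*i+1)^2 = 4*(i*i) + 4*i + 1" by (simp add: power2_eq_square algebra_simps)
  show ?thesis unfolding eq1 eq2 using f h by linarith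
qed
lemma ineq_common: "t+2 \<le> (i::nat) \<Longrightarrow> ((2*i+1)*b + b) * ((i+1+t)*b) \<le> ((2*i+1)*b)^2"
proof -
  assume h: "t+2 \<le> i"
  have "(2*i+2)*(i+1+t) * (b*b) \<le> (2*i+1)^2 * (b*b)" using aux_ineq[OF h] by (rule mult_right_mono) simp
  moreover have "((2*i+1)*b + b) * ((i+1+t)*b) = (2*i+2)*(i+1+t) * (b*b)" by (simp add: algebra_simps)
  moreover have "((2*i+1)*b)^2 = (2*i+1)^2 * (b*b)" by (simp add: power2_eq_square algebra_simps)
  ultimately show ?thesis by simp
qed
lemma ineq_nc: fixes x y e b a c :: nat
  assumes "x \<le> e + c1 * b" "y \<le> e + c2 * a" "e \<le> b" "b \<le> a" "(c1+1)*(c2+1)*b \<le> a"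
  shows "x * y \<le> a^2"
proof -
  have "x \<le> (c1+1)*b" using assms by simp
  moreover have "y \<le> (c2+1)*a" using assms by simp
  ultimately have "x*y \<le> ((c1+1)*b) * ((c2+1)*a)" by (rule mult_le_mono)
  also have "\<dots> = ((c1+1)*(c2+1)*b) * a" by (simp add: algebra_simps)
  also have "\<dots> \<le> a * a" using assms(5) by (rule mult_right_mono) simp
  finally show ?thesis by (simp add: power2_eq_square)
qed

lemma hyp_t:
  assumes "BB \<noteq> {}" "\<forall>A\<in>AA. finite A"
  shows "\<forall>Y. X \<subseteq> Y \<longrightarrow> card Y < t \<longrightarrow> (\<exists>A\<in>AA. Y \<subseteq> A) \<longrightarrow> (\<exists>B\<in>BB. card (Y \<inter> B) < t)"
proof (intro allI impI)
  fix Y assume Y: "card Y < t" "\<exists>A\<in>AA. Y \<subseteq> A"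
  then obtain A where "A \<in> AA" "Y \<subseteq> A" by blast
  hence fY: "finite Y" using assms(2) finite_subset by blast
  obtain B where B: "B \<in> BB" using assms(1) by blast
  have "card (Y \<inter> B) \<le> card Y" using fY by (simp add: card_mono)
  thus "\<exists>B\<in>BB. card (Y \<inter> B) < t" using B Y(1) by (meson le_less_trans)
qed

lemma hyp_II:
  assumes "BB \<noteq> {}" "\<forall>A\<in>AA. finite A" "\<not> (\<exists>T. finite T \<and> card T = t \<and> (\<forall>S\<in>BB. T \<subseteq> S))"
  shows "\<forall>Y. {} \<subseteq> Y \<longrightarrow> card Y < Suc t \<longrightarrow> (\<exists>A\<in>AA. Y \<subseteq> A) \<longrightarrow> (\<exists>B\<in>BB. card (Y \<inter> B) < t)"
proof (intro allI impI)
  fix Y assume Y: "card Y < Suc t" "\<exists>A\<in>AA. Y \<subseteq> A"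
  then obtain A where "A \<in> AA" "Y \<subseteq> A" by blast
  hence fY: "finite Y" using assms(2) finite_subset by blast
  show "\<exists>B\<in>BB. card (Y \<inter> B) < t"
  proof (rule ccontr)
    assume "\<not> (\<exists>B\<in>BB. card (Y \<inter> B) < t)"
    hence all: "\<forall>B\<in>BB. t \<le> card (Y \<inter> B)" by auto
    obtain B0 where B0: "B0 \<in> BB" using assms(1) by blast
    have "t \<le> card (Y \<inter> B0)" using all B0 by blast
    also have "\<dots> \<le> card Y" using fY by (simp add: card_mono)
    finally have cY: "card Y = t" using Y(1) by simp
    have "\<forall>S\<in>BB. Y \<subseteq> S"
    proof
      fix S assume S: "S \<in> BB"
      have "Y \<inter> S \<subseteq> Y" by blast
      moreover have "card Y \<le> card (Y \<inter> S)" using all S cY by simp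
      ultimately have "Y \<inter> S = Y" using fY by (meson card_seteq finite_subset)
      thus "Y \<subseteq> S" by blast
    qed
    thus False using assms(3) fY cY by blast
  qed
qed

lemma hyp_I:
  assumes "\<forall>A\<in>AA. finite A" "finite T2" "card T2 = t" "S \<in> BB" "\<not> T2 \<subseteq> S"
  shows "\<forall>Y. T2 \<subseteq> Y \<longrightarrow> card Y < Suc t \<longrightarrow> (\<exists>A\<in>AA. Y \<subseteq> A) \<longrightarrow> (\<exists>B\<in>BB. card (Y \<inter> B) < t)"
proof (intro allI impI)
  fix Y assume Y: "T2 \<subseteq> Y" "card Y < Suc t" "\<exists>A\<in>AA. Y \<subseteq> A"
  then obtain A where "A \<in> AA" "Y \<subseteq> A" by blast
  hence fY: "finite Y" using assms(1) finite_subset by blast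
  have "card T2 \<le> card Y" using fY Y(1) by (simp add: card_mono)
  hence "card Y = card T2" using Y(2) assms(3) by simp
  hence YT: "Y = T2" using card_subset_eq[OF fY Y(1)] by simp
  have "T2 \<inter> S \<subset> T2" using assms(5) by blast
  hence "card (T2 \<inter> S) < card T2" using assms(2) by (rule psubset_card_mono[rotated])
  thus "\<exists>B\<in>BB. card (Y \<inter> B) < t" using YT assms(3,4) by blast
qed

lemma star_reduce:
  assumes n: "n \<ge> 1" and fT: "finite T" and cT: "card T = t"
    and f0: "f0 \<in> near_perfect_matchings n" and nT: "\<not> T \<subseteq> f0"
    and YM: "Y \<subseteq> near_perfect_matchings n" and cr: "\<forall>g\<in>Y. t \<le> card (f0 \<inter> g)"
  shows "card (Y \<inter> star n T) \<le> (n-1) * odd_dfact (n - Suc t)"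
proof -
  have ff0: "finite f0" using npm_member_finite[OF f0] .
  have sub: "Y \<inter> star n T \<subseteq> (\<Union>e\<in>f0 - T. star n (insert e T))"
  proof
    fix g assume g: "g \<in> Y \<inter> star n T"
    hence Tg: "T \<subseteq> g" and gM: "g \<in> near_perfect_matchings n" unfolding star_def by auto
    have "\<exists>e\<in>f0 - T. e \<in> g"
    proof (rule ccontr)
      assume "\<not> (\<exists>e\<in>f0 - T. e \<in> g)"
      hence "f0 \<inter> g \<subseteq> f0 \<inter> T" by blast
      hence "card (f0 \<inter> g) \<le> card (f0 \<inter> T)" using ff0 by (simp add: card_mono)
      moreover have "f0 \<inter> T \<subset> T" using nT by blast
      hence "card (f0 \<inter> T) < card T" using fT by (rule psubset_card_mono[rotated])
      ultimately show False using cr g cT by fastforce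
    qed
    then obtain e where "e \<in> f0 - T" "e \<in> g" by blast
    thus "g \<in> (\<Union>e\<in>f0 - T. star n (insert e T))" using Tg gM unfolding star_def by blast
  qed
  have "card (Y \<inter> star n T) \<le> card (\<Union>e\<in>f0 - T. star n (insert e T))"
    by (rule card_mono[OF _ sub]) (rule finite_UN_I, use ff0 in simp, rule star_finite)
  also have "\<dots> \<le> (\<Sum>e\<in>f0 - T. card (star n (insert e T)))"
    by (rule card_UN_le) (simp add: ff0)
  also have "\<dots> \<le> (\<Sum>e\<in>f0 - T. odd_dfact (n - Suc t))"
  proof (rule sum_mono)
    fix e assume "e \<in> f0 - T"
    hence "card (insert e T) = Suc t" using fT cT by simp
    thus "card (star n (insert e T)) \<le> odd_dfact (n - Suc t)" using star_card[OF n, of "insert e T"] by simp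
  qed
  also have "\<dots> = card (f0 - T) * odd_dfact (n - Suc t)" by simp
  also have "\<dots> \<le> (n-1) * odd_dfact (n - Suc t)"
  proof -
    have "card (f0 - T) \<le> card f0" using ff0 by (simp add: card_mono)
    thus ?thesis using npm_card[OF f0] by (simp add: mult_right_mono)
  qed
  finally show ?thesis .
qed


lemma branching_star:
  assumes n1: "n \<ge> 1" and astep: "\<forall>d<q. q * odd_dfact (n - Suc d) \<le> odd_dfact (n - d)"
    and AA: "\<And>A. A \<in> AA \<Longrightarrow> finite A \<and> card A \<le> q"
    and BB: "\<And>B. B \<in> BB \<Longrightarrow> finite B \<and> card B \<le> q"
    and cross: "\<And>A B. A \<in> AA \<Longrightarrow> B \<in> BB \<Longrightarrow> t \<le> card (A \<inter> B)"
    and fX: "finite X"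
    and hyp: "\<forall>Y. X \<subseteq> Y \<longrightarrow> card Y < m \<longrightarrow> (\<exists>A\<in>AA. Y \<subseteq> A) \<longrightarrow> (\<exists>B\<in>BB. card (Y \<inter> B) < t)"
  shows "card (\<Union>A\<in>{A\<in>AA. X \<subseteq> A}. star n A) \<le> q^(m - card X) * odd_dfact (n - max (card X) m)"
proof -
  have "card (\<Union>A\<in>{A\<in>AA. X \<subseteq> A}. star n A) \<le> q^(m - card X) * (\<lambda>d. odd_dfact (n - d)) (max (card X) m)"
  proof (rule branching[where st="star n" and a="\<lambda>d. odd_dfact (n - d)" and t=t])
    show "\<And>X Y. X \<subseteq> Y \<Longrightarrow> star n Y \<subseteq> star n X" by (rule star_mono)
    show "\<And>X. finite (star n X)" by (rule star_finite)
    show "\<And>X. card (star n X) \<le> odd_dfact (n - card X)" by (rule star_card[OF n1])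
    show "\<And>d. d < q \<Longrightarrow> q * odd_dfact (n - Suc d) \<le> odd_dfact (n - d)" using astep by blast
  qed (use AA BB cross fX hyp in auto)
  thus ?thesis by simp
qed

lemma odd_Suc: "odd_dfact (Suc k) = (2*k+1) * odd_dfact k"
  by (simp add: odd_dfact_def)

lemma main_fixed:
  fixes n q t :: nat and F G :: "nat set set set"
  assumes tq: "t < q" and nq: "4*q + 2 \<le> n"
    and P2: "n^t * (n^q * odd_dfact (n - q)) \<le> odd_dfact (n - Suc t)"
    and P3: "(q^(t+1)+1)*(q^t+1) \<le> 2*(n-t) - 1"
    and FM: "F \<subseteq> near_perfect_matchings n" and GM: "G \<subseteq> near_perfect_matchings n"
    and cr: "t_cross_intersecting t F G"
  shows "card F * card G \<le> (odd_dfact (n - t))^2"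
proof -
  define a where "a = odd_dfact (n - t)"
  define b where "b = odd_dfact (n - Suc t)"
  define eps where "eps = n^q * odd_dfact (n - q)"
  define i where "i = n - Suc t"
  have n1: "n \<ge> 1" using nq by simp
  have ni: "n - t = Suc i" unfolding i_def using tq nq by simp
  have ab: "a = (2*i+1) * b" unfolding a_def b_def ni by (simp add: odd_dfact_def i_def)
  have ba: "b \<le> a" using ab by simp
  have eb: "eps \<le> b"
  proof -
    have "1 \<le> n^t" using n1 by simp
    hence "eps \<le> n^t * eps" by simp
    thus ?thesis using P2 unfolding eps_def b_def by linarith
  qed
  have it: "t + 2 \<le> i" unfolding i_def using tq nq by simp
  have nit: "n = i + 1 + t" unfolding i_def using tq nq by simp
  have P3': "(q^(t+1)+1)*(q^t+1) * b \<le> a"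
  proof -
    have "2*(n-t) - 1 = 2*i+1" using ni by simp
    hence "(q^(t+1)+1)*(q^t+1) * b \<le> (2*i+1) * b" using P3 by (simp add: mult_right_mono)
    thus ?thesis using ab by simp
  qed
  have astep: "\<And>d. d < q \<Longrightarrow> q * odd_dfact (n - Suc d) \<le> odd_dfact (n - d)"
  proof -
    fix d assume d: "d < q"
    have e: "n - d = Suc (n - Suc d)" using d nq by simp
    have "q \<le> 2*(n - Suc d) + 1" using d nq by simp
    hence "q * odd_dfact (n - Suc d) \<le> (2*(n - Suc d) + 1) * odd_dfact (n - Suc d)" by (rule mult_right_mono) simp
    thus "q * odd_dfact (n - Suc d) \<le> odd_dfact (n - d)" unfolding e odd_Suc .
  qed
  have fF: "finite F" using FM npm_finite finite_subset by blast
  have fG: "finite G" using GM npm_finite finite_subset by blast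
  have crr: "\<And>f g. f \<in> F \<Longrightarrow> g \<in> G \<Longrightarrow> t \<le> card (f \<inter> g)"
    using cr unfolding t_cross_intersecting_def by blast
  show ?thesis
  proof (cases "F = {} \<or> G = {}")
    case True thus ?thesis by auto
  next
    case False
    hence Fne: "F \<noteq> {}" and Gne: "G \<noteq> {}" by auto
    have npos: "(0::nat) < n" using n1 by simp
    obtain K1 R1 where D1: "R1 \<subseteq> F" "card R1 \<le> n^q * odd_dfact (n - q)"
      "F \<subseteq> R1 \<union> (\<Union>S\<in>K1. star n S)" "\<forall>S\<in>K1. card S < q \<and> finite S \<and> (\<exists>H. spread_ok n S F H)"
      using decomp_aux[OF n1 npos refl FM, where q=q] by blast
    obtain K2 R2 where D2: "R2 \<subseteq> G" "card R2 \<le> n^q * odd_dfact (n - q)"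
      "G \<subseteq> R2 \<union> (\<Union>S\<in>K2. star n S)" "\<forall>S\<in>K2. card S < q \<and> finite S \<and> (\<exists>H. spread_ok n S G H)"
      using decomp_aux[OF n1 npos refl GM, where q=q] by blast
    have fR1: "finite R1" using D1(1) fF finite_subset by blast
    have fR2: "finite R2" using D2(1) fG finite_subset by blast
    have cR1: "card R1 \<le> eps" using D1(2) eps_def by simp
    have cR2: "card R2 \<le> eps" using D2(2) eps_def by simp
    define U1 where "U1 = (\<Union>S\<in>K1. star n S)"
    define U2 where "U2 = (\<Union>S\<in>K2. star n S)"
    have fU1: "finite U1" unfolding U1_def
      by (rule finite_subset[OF _ npm_finite[of n]]) (auto simp: star_def)
    have fU2: "finite U2" unfolding U2_def
      by (rule finite_subset[OF _ npm_finite[of n]]) (auto simp: star_def)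
    have cF: "card F \<le> eps + card U1"
    proof -
      have "card F \<le> card (R1 \<union> U1)" using D1(3) fR1 fU1 unfolding U1_def by (simp add: card_mono)
      also have "\<dots> \<le> card R1 + card U1" by (rule card_Un_le)
      finally show ?thesis using cR1 by simp
    qed
    have cG: "card G \<le> eps + card U2"
    proof -
      have "card G \<le> card (R2 \<union> U2)" using D2(3) fR2 fU2 unfolding U2_def by (simp add: card_mono)
      also have "\<dots> \<le> card R2 + card U2" by (rule card_Un_le)
      finally show ?thesis using cR2 by simp
    qed
    have K1p: "\<And>S. S \<in> K1 \<Longrightarrow> finite S \<and> card S \<le> q" using D1(4) by fastforce
    have K2p: "\<And>S. S \<in> K2 \<Longrightarrow> finite S \<and> card S \<le> q" using D2(4) by fastforce
    have kc: "\<And>S1 S2. S1 \<in> K1 \<Longrightarrow> S2 \<in> K2 \<Longrightarrow> t \<le> card (S1 \<inter> S2)"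
    proof -
      fix S1 S2 assume S1: "S1 \<in> K1" and S2: "S2 \<in> K2"
      obtain H1 where H1: "spread_ok n S1 F H1" and c1: "card S1 < q" "finite S1" using D1(4) S1 by blast
      obtain H2 where H2: "spread_ok n S2 G H2" and c2: "card S2 < q" "finite S2" using D2(4) S2 by blast
      have fH1: "finite H1" using H1 fF unfolding spread_ok_def using finite_subset by blast
      have fH2: "finite H2" using H2 fG unfolding spread_ok_def using finite_subset by blast
      have h1p: "\<forall>h\<in>H1. S1 \<subseteq> h \<and> finite h \<and> card h < n"
      proof
        fix h assume h: "h \<in> H1"
        hence hM: "h \<in> near_perfect_matchings n" using H1 FM unfolding spread_ok_def by blast
        show "S1 \<subseteq> h \<and> finite h \<and> card h < n"
          using H1 h npm_member_finite[OF hM] npm_card[OF hM] n1 unfolding spread_ok_def by auto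
      qed
      have cS: "card (S2 - S1) < n"
      proof -
        have "card (S2 - S1) \<le> card S2" using c2 by (simp add: card_mono)
        thus ?thesis using c2 nq by simp
      qed
      show "t \<le> card (S1 \<inter> S2)"
      proof (rule kernel_cross[OF fH1 _ h1p _ fH2])
        show "H1 \<noteq> {}" "H2 \<noteq> {}" using H1 H2 unfolding spread_ok_def by auto
        show "\<forall>e. e \<notin> S1 \<longrightarrow> n * card {h \<in> H1. e \<in> h} \<le> card H1" using H1 unfolding spread_ok_def by auto
        show "\<forall>h\<in>H2. S2 \<subseteq> h" using H2 unfolding spread_ok_def by auto
        show "\<forall>e. e \<notin> S2 \<longrightarrow> n * card {h \<in> H2. e \<in> h} \<le> card H2" using H2 unfolding spread_ok_def by auto
        show "finite S1" "finite S2" by fact+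
        show "card (S2 - S1) < n" by (rule cS)
        show "\<forall>h1\<in>H1. \<forall>h2\<in>H2. t \<le> card (h1 \<inter> h2)"
          using H1 H2 crr unfolding spread_ok_def by blast
      qed
    qed
    have kc': "\<And>S2 S1. S2 \<in> K2 \<Longrightarrow> S1 \<in> K1 \<Longrightarrow> t \<le> card (S2 \<inter> S1)"
      using kc by (metis Int_commute)
    have astep': "\<forall>d<q. q * odd_dfact (n - Suc d) \<le> odd_dfact (n - d)" using astep by blast
    note bran = branching_star[OF n1 astep']
    show ?thesis
    proof (cases "K2 = {}")
      case True
      hence "card G \<le> eps" using cG unfolding U2_def by simp
      moreover obtain g0 where g0: "g0 \<in> G" using Gne by blast
      have "card F \<le> n^t * a" unfolding a_def
        using gen_bound[OF n1 FM _, of g0 t] g0 GM crr by blast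
      ultimately have "card F * card G \<le> (n^t * a) * eps" by (rule mult_le_mono[rotated])
      also have "\<dots> = a * (n^t * eps)" by simp
      also have "\<dots> \<le> a * b" using P2 unfolding eps_def b_def by simp
      also have "\<dots> \<le> a * a" using ba by simp
      finally show ?thesis unfolding a_def by (simp add: power2_eq_square)
    next
      case K2ne: False
      show ?thesis
      proof (cases "K1 = {}")
        case True
        hence "card F \<le> eps" using cF unfolding U1_def by simp
        moreover obtain f0 where f0: "f0 \<in> F" using Fne by blast
        have "card G \<le> n^t * a" unfolding a_def
        proof (rule gen_bound[OF n1 GM])
          show "f0 \<in> near_perfect_matchings n" using f0 FM by blast
          show "\<forall>g\<in>G. t \<le> card (g \<inter> f0)" using crr f0 by (metis Int_commute)
        qed
        ultimately have "card F * card G \<le> eps * (n^t * a)" by (rule mult_le_mono)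
        also have "\<dots> = a * (n^t * eps)" by simp
        also have "\<dots> \<le> a * b" using P2 unfolding eps_def b_def by simp
        also have "\<dots> \<le> a * a" using ba by simp
        finally show ?thesis unfolding a_def by (simp add: power2_eq_square)
      next
        case K1ne: False
        show ?thesis
        proof (cases "\<exists>T. finite T \<and> card T = t \<and> (\<forall>S\<in>K1. T \<subseteq> S) \<and> (\<forall>S\<in>K2. T \<subseteq> S)")
          case True
          then obtain T where T: "finite T" "card T = t" "\<forall>S\<in>K1. T \<subseteq> S" "\<forall>S\<in>K2. T \<subseteq> S" by blast
          have U1T: "U1 \<subseteq> star n T" unfolding U1_def using T(3) star_mono by blast
          have U2T: "U2 \<subseteq> star n T" unfolding U2_def using T(4) star_mono by blast
          have cT: "card (star n T) \<le> a" using star_card[OF n1, of T] T(2) a_def by simp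
          have cU1: "card U1 \<le> a" using card_mono[OF star_finite U1T] cT by simp
          have cU2: "card U2 \<le> a" using card_mono[OF star_finite U2T] cT by simp
          show ?thesis
          proof (cases "F \<subseteq> star n T \<and> G \<subseteq> star n T")
            case True
            hence "card F \<le> a" "card G \<le> a" using card_mono[OF star_finite, of F n T] card_mono[OF star_finite, of G n T] cT by auto
            hence "card F * card G \<le> a * a" by (rule mult_le_mono)
            thus ?thesis unfolding a_def by (simp add: power2_eq_square)
          next
            case False
            have key: "((2*i+1)*b + b) * ((i+1+t)*b) \<le> ((2*i+1)*b)^2" by (rule ineq_common[OF it])
            show ?thesis
            proof (cases "F \<subseteq> star n T")
              case False
              then obtain f0 where f0: "f0 \<in> F" "f0 \<notin> star n T" by blast
              have f0M: "f0 \<in> near_perfect_matchings n" using f0 FM by blast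
              have nT: "\<not> T \<subseteq> f0" using f0 f0M unfolding star_def by blast
              have red: "card (G \<inter> star n T) \<le> (n-1) * b" unfolding b_def
                by (rule star_reduce[OF n1 T(1) T(2) f0M nT GM]) (use crr f0 in blast)
              have "G \<subseteq> R2 \<union> (G \<inter> star n T)" using D2(3) U2T unfolding U2_def by blast
              hence "card G \<le> card (R2 \<union> (G \<inter> star n T))" using fR2 fG by (simp add: card_mono)
              also have "\<dots> \<le> card R2 + card (G \<inter> star n T)" by (rule card_Un_le)
              finally have "card G \<le> eps + (n-1) * b" using cR2 red by linarith
              hence cG': "card G \<le> (i+1+t) * b" using eb nit n1
                by (metis add_le_mono1 le_trans mult_eq_if add.commute diff_Suc_1 mult_Suc Suc_pred npos)
              have cF': "card F \<le> (2*i+1)*b + b" using cF cU1 eb ab by linarith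
              have "card F * card G \<le> ((2*i+1)*b + b) * ((i+1+t)*b)" using cF' cG' by (rule mult_le_mono)
              also have "\<dots> \<le> ((2*i+1)*b)^2" by (rule key)
              finally show ?thesis using ab a_def by simp
            next
              case True
              with False have "\<not> G \<subseteq> star n T" by blast
              then obtain g0 where g0: "g0 \<in> G" "g0 \<notin> star n T" by blast
              have g0M: "g0 \<in> near_perfect_matchings n" using g0 GM by blast
              have nT: "\<not> T \<subseteq> g0" using g0 g0M unfolding star_def by blast
              have red: "card (F \<inter> star n T) \<le> (n-1) * b" unfolding b_def
                by (rule star_reduce[OF n1 T(1) T(2) g0M nT FM]) (use crr g0 in \<open>metis Int_commute\<close>)
              have "F \<subseteq> R1 \<union> (F \<inter> star n T)" using D1(3) U1T unfolding U1_def by blast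
              hence "card F \<le> card (R1 \<union> (F \<inter> star n T))" using fR1 fF by (simp add: card_mono)
              also have "\<dots> \<le> card R1 + card (F \<inter> star n T)" by (rule card_Un_le)
              finally have "card F \<le> eps + (n-1) * b" using cR1 red by linarith
              hence cF': "card F \<le> (i+1+t) * b" using eb nit n1
                by (metis add_le_mono1 le_trans mult_eq_if add.commute diff_Suc_1 mult_Suc Suc_pred npos)
              have cG': "card G \<le> (2*i+1)*b + b" using cG cU2 eb ab by linarith
              have "card G * card F \<le> ((2*i+1)*b + b) * ((i+1+t)*b)" using cG' cF' by (rule mult_le_mono)
              also have "\<dots> \<le> ((2*i+1)*b)^2" by (rule key)
              finally show ?thesis using ab a_def by (simp add: mult.commute)
            qed
          qed
        next
          case nocommon: False
          have K1f: "\<forall>A\<in>K1. finite A" using K1p by blast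
          have K2f: "\<forall>A\<in>K2. finite A" using K2p by blast
          have U1eq: "(\<Union>A\<in>{A\<in>K1. {} \<subseteq> A}. star n A) = U1" unfolding U1_def by simp
          have U2eq: "(\<Union>A\<in>{A\<in>K2. {} \<subseteq> A}. star n A) = U2" unfolding U2_def by simp
          have qpos: "q \<le> q^(t+1)" using tq by (simp add: self_le_power)
          show ?thesis
          proof (cases "\<exists>T2. finite T2 \<and> card T2 = t \<and> (\<forall>S\<in>K2. T2 \<subseteq> S)")
            case True
            then obtain T2 where T2: "finite T2" "card T2 = t" "\<forall>S\<in>K2. T2 \<subseteq> S" by blast
            obtain S where S: "S \<in> K1" "\<not> T2 \<subseteq> S" using nocommon T2 by blast
            have "card (\<Union>A\<in>{A\<in>K2. T2 \<subseteq> A}. star n A) \<le> q^(Suc t - card T2) * odd_dfact (n - max (card T2) (Suc t))"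
              by (rule bran[OF K2p K1p kc' T2(1) hyp_I[OF K2f T2(1) T2(2) S]])
            moreover have "{A\<in>K2. T2 \<subseteq> A} = K2" using T2(3) by blast
            ultimately have "card U2 \<le> q * b" unfolding U2_def b_def using T2(2) by simp
            hence cU2: "card U2 \<le> q^(t+1) * b" using qpos by (meson le_trans mult_right_mono zero_le)
            have "card (\<Union>A\<in>{A\<in>K1. {} \<subseteq> A}. star n A) \<le> q^(t - card ({}::nat set set)) * odd_dfact (n - max (card ({}::nat set set)) t)"
              by (rule bran[OF K1p K2p kc finite.emptyI hyp_t[OF K2ne K1f]])
            hence cU1: "card U1 \<le> q^t * a" unfolding U1eq a_def by simp
            have "card G * card F \<le> a^2"
              by (rule ineq_nc[OF _ _ eb ba P3']) (use cG cU2 cF cU1 in linarith)+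
            thus ?thesis unfolding a_def by (simp add: mult.commute)
          next
            case False
            have "card (\<Union>A\<in>{A\<in>K1. {} \<subseteq> A}. star n A) \<le> q^(Suc t - card ({}::nat set set)) * odd_dfact (n - max (card ({}::nat set set)) (Suc t))"
              by (rule bran[OF K1p K2p kc finite.emptyI hyp_II[OF K2ne K1f False]])
            hence cU1: "card U1 \<le> q^(t+1) * b" unfolding U1eq b_def by simp
            have "card (\<Union>A\<in>{A\<in>K2. {} \<subseteq> A}. star n A) \<le> q^(t - card ({}::nat set set)) * odd_dfact (n - max (card ({}::nat set set)) t)"
              by (rule bran[OF K2p K1p kc' finite.emptyI hyp_t[OF K1ne K2f]])
            hence cU2: "card U2 \<le> q^t * a" unfolding U2eq a_def by simp
            have "card F * card G \<le> a^2"
              by (rule ineq_nc[OF _ _ eb ba P3']) (use cG cU2 cF cU1 in linarith)+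
            thus ?thesis unfolding a_def .
          qed
        qed
      qed
    qed
  qed
qed

lemma exp_beats_poly: fixes C D :: nat shows "\<exists>K. \<forall>k\<ge>K. C * (k+1)^D \<le> 2^k"
proof -
  define L :: real where "L = ln 2"
  have Lpos: "L > 0" unfolding L_def by simp
  define eps :: real where "eps = L^D / (real C * 2^D + 1)"
  have "real C * 2^D + 1 > 0" by (simp add: add_nonneg_pos)
  hence epos: "eps > 0" unfolding eps_def using Lpos by (simp add: divide_pos_pos)
  have "eventually (\<lambda>x. x^D / exp x < eps) at_top"
    using order_tendstoD(2)[OF tendsto_power_div_exp_0[of D] epos] .
  then obtain X where X: "\<And>x. x \<ge> X \<Longrightarrow> x^D / exp x < eps" by (auto simp: eventually_at_top_linorder)
  define K where "K = nat \<lceil>X / L\<rceil> + 1"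
  show ?thesis
  proof (intro exI[of _ K] allI impI)
    fix k assume k: "K \<le> k"
    have k1: "k \<ge> 1" using k K_def by simp
    have "X / L \<le> real k" using k K_def by linarith
    hence "X \<le> real k * L" using Lpos by (simp add: field_simps)
    hence "(real k * L)^D / exp (real k * L) < eps" by (rule X)
    moreover have "exp (real k * L) = 2^k" unfolding L_def by (simp add: exp_of_nat_mult)
    ultimately have "(real k * L)^D / 2^k < eps" by simp
    hence "L^D * real k^D / 2^k < L^D / (real C * 2^D + 1)" unfolding eps_def by (simp add: power_mult_distrib mult.commute)
    moreover have "(0::real) < 1 + real C * 2^D" by (simp add: add_pos_nonneg)
    ultimately have "L^D * real k^D * (real C * 2^D + 1) < L^D * 2^k"
      by (simp add: field_simps)
    hence a: "real k^D * (real C * 2^D + 1) < 2^k" using Lpos by (simp add: mult.assoc)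
    have "real C * real (k+1)^D \<le> real C * (2^D * real k^D)"
    proof -
      have "real (k+1) \<le> 2 * real k" using k1 by simp
      hence "real (k+1)^D \<le> (2 * real k)^D" by (rule power_mono) simp
      thus ?thesis by (simp add: power_mult_distrib mult_left_mono)
    qed
    also have "\<dots> \<le> real k^D * (real C * 2^D + 1)" by (simp add: algebra_simps)
    finally have "real (C * (k+1)^D) < real (2^k::nat)" using a by simp
    thus "C * (k+1)^D \<le> 2^k" by linarith
  qed
qed

lemma prod_step:
  assumes nq: "4*q+2 \<le> (n::nat)"
  shows "t+1+j \<le> q \<Longrightarrow> 3^j * n^j * odd_dfact (n - (t+1+j)) \<le> 2^j * odd_dfact (n - (t+1))"
proof (induction j)
  case 0 thus ?case by simp
next
  case (Suc j)
  define d where "d = t+1+j"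
  have dq: "Suc d \<le> q" using Suc.prems d_def by simp
  have IH: "3^j * n^j * odd_dfact (n - d) \<le> 2^j * odd_dfact (n - (t+1))" using Suc.IH Suc.prems d_def by simp
  have e: "n - d = Suc (n - Suc d)" using dq nq by simp
  have o: "odd_dfact (n - d) = (2*(n - Suc d)+1) * odd_dfact (n - Suc d)" unfolding e by (simp add: odd_dfact_def)
  have three: "3*n \<le> 2*(2*(n - Suc d)+1)" using dq nq by simp
  have "3^Suc j * n^Suc j * odd_dfact (n - Suc d) = (3*n) * (3^j * n^j * odd_dfact (n - Suc d))" by (simp add: algebra_simps)
  also have "\<dots> \<le> (2*(2*(n - Suc d)+1)) * (3^j * n^j * odd_dfact (n - Suc d))" using three by (rule mult_right_mono) simp
  also have "\<dots> = 2 * (3^j * n^j * odd_dfact (n - d))" unfolding o by (simp add: algebra_simps)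
  also have "\<dots> \<le> 2 * (2^j * odd_dfact (n - (t+1)))" using IH by simp
  also have "\<dots> = 2^Suc j * odd_dfact (n - (t+1))" by simp
  finally show ?case using d_def by simp
qed

lemma asymp_choice:
  fixes t :: nat
  shows "\<exists>n0. \<forall>n\<ge>n0. \<exists>q. t < q \<and> 4*q+2 \<le> n \<and> n^t * (n^q * odd_dfact (n - q)) \<le> odd_dfact (n - Suc t) \<and>
     (q^(t+1)+1)*(q^t+1) \<le> 2*(n-t) - 1"
proof -
  define D where "D = 2*t+1"
  define C where "C = 2*(4*t+24)*(4*t+2)^D"
  obtain K where K: "\<forall>k\<ge>K. C*(k+1)^D \<le> 2^k" using exp_beats_poly by blast
  show ?thesis
  proof (rule exI[of _ "2^Suc K + 2"], intro allI impI)
    fix n :: nat assume n0: "2^Suc K + 2 \<le> n"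
    have ex: "\<exists>k. n \<le> 2^k" using less_exp[of n] by (meson less_imp_le)
    define k where "k = (LEAST k. n \<le> 2^k)"
    have nk: "n \<le> 2^k" unfolding k_def using LeastI_ex[OF ex] .
    have k0: "k \<noteq> 0"
    proof
      assume "k = 0" thus False using nk n0 by simp
    qed
    have "\<not> n \<le> 2^(k-1)" unfolding k_def by (rule not_less_Least) (use k0 k_def in simp)
    hence low: "2^k < 2*n" using k0 by (cases k) auto
    have kK: "K \<le> k"
    proof (rule ccontr)
      assume "\<not> K \<le> k"
      hence "2^k \<le> (2::nat)^K" by simp
      also have "\<dots> < 2^Suc K" by simp
      finally show False using nk n0 by simp
    qed
    define j0 where "j0 = D*(2*k)"
    define q where "q = t + 1 + j0"
    define Kk where "Kk = (4*t+2)*(k+1)"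
    have qK: "q \<le> Kk" unfolding q_def Kk_def j0_def D_def by (simp add: algebra_simps)
    have q1: "1 \<le> q" unfolding q_def by simp
    have Kk1: "1 \<le> Kk" unfolding Kk_def by simp
    have D1: "1 \<le> D" unfolding D_def by simp
    have KkD: "Kk \<le> Kk^D" by (rule self_le_power) (use Kk1 D1 in auto)
    have KkDe: "Kk^D = (4*t+2)^D * (k+1)^D" unfolding Kk_def by (rule power_mult_distrib)
    have "C*(k+1)^D = 2*(4*t+24)*Kk^D" unfolding C_def KkDe by (simp only: mult.assoc)
    hence poly: "2*(4*t+24)*Kk^D < 2*n" using K kK low by (metis le_less_trans)
    hence "2*((4*t+24)*Kk^D) < 2*n" by (simp only: mult.assoc)
    hence polyn: "(4*t+24)*Kk^D < n" by linarith
    have KkD1: "1 \<le> Kk^D" using Kk1 by simp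
    have c1: "t < q" unfolding q_def by simp
    have c2: "4*q+2 \<le> n"
    proof -
      have "4*q+2 \<le> 6*Kk" using qK q1 by simp
      also have "\<dots> \<le> 6*Kk^D" using KkD by simp
      also have "\<dots> \<le> (4*t+24)*Kk^D" by (rule mult_right_mono) simp_all
      finally show ?thesis using polyn by simp
    qed
    have c4: "(q^(t+1)+1)*(q^t+1) \<le> 2*(n-t) - 1"
    proof -
      have a1: "q^(t+1)+1 \<le> 2*q^(t+1)" using q1 by simp
      have a2: "q^t+1 \<le> 2*q^t" using q1 by simp
      have "(q^(t+1)+1)*(q^t+1) \<le> (2*q^(t+1))*(2*q^t)" using a1 a2 by (rule mult_le_mono)
      also have "\<dots> = (2*2)*(q^(t+1)*q^t)" by (simp only: mult_ac)
      also have "q^(t+1)*q^t = q^D"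
      proof -
        have "D = (t+1)+t" unfolding D_def by simp
        thus ?thesis by (simp only: power_add)
      qed
      also have "(2*2)*q^D = 4*q^D" by simp
      also have "\<dots> \<le> 4*Kk^D" using qK by (simp add: power_mono)
      finally have "(q^(t+1)+1)*(q^t+1) \<le> 4*Kk^D" .
      moreover have "4*Kk^D + 2*t + 1 \<le> 2*n"
      proof -
        have "(4*t+1)*1 \<le> (4*t+1)*Kk^D" by (rule mult_le_mono2[OF KkD1])
        hence "4*t+1 \<le> (4*t+1)*Kk^D" by (simp only: mult_1_right)
        moreover have "(4*t+1)*Kk^D = 4*(t*Kk^D) + Kk^D" by (simp add: algebra_simps)
        moreover have "2*((4*t+24)*Kk^D) = 8*(t*Kk^D) + 48*Kk^D" by (simp add: algebra_simps)
        ultimately have "4*Kk^D + 2*t + 1 \<le> 2*((4*t+24)*Kk^D)" by linarith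
        thus ?thesis using polyn by linarith
      qed
      ultimately show ?thesis by linarith
    qed
    have c3: "n^t * (n^q * odd_dfact (n - q)) \<le> odd_dfact (n - Suc t)"
    proof -
      have ps: "3^j0 * n^j0 * odd_dfact (n - (t+1+j0)) \<le> 2^j0 * odd_dfact (n - (t+1))"
        by (rule prod_step[OF c2]) (simp add: q_def)
      have pw: "n^D * 2^j0 \<le> 3^j0"
      proof -
        have "n * 4^k \<le> 2^k * 4^k" using nk by simp
        also have "\<dots> = 8^k" by (simp add: power_mult_distrib[symmetric])
        also have "\<dots> \<le> 9^k" by (rule power_mono) simp_all
        finally have "(n * 4^k)^D \<le> (9^k)^D" by (rule power_mono) simp
        moreover have "(n * 4^k)^D = n^D * 2^j0"
        proof -
          have j: "j0 = (2*k)*D" unfolding j0_def by simp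
          have "(4::nat)^k = 2^(2*k)" by (simp add: power_mult)
          hence "(n * 4^k)^D = n^D * (2^(2*k))^D" by (simp add: power_mult_distrib)
          also have "((2::nat)^(2*k))^D = 2^j0" unfolding j by (rule power_mult[symmetric])
          finally show ?thesis .
        qed
        moreover have "(9^k)^D = (3::nat)^j0"
        proof -
          have j: "j0 = (2*k)*D" unfolding j0_def by simp
          have "(9::nat)^k = 3^(2*k)" by (simp add: power_mult)
          hence "(9^k)^D = ((3::nat)^(2*k))^D" by simp
          also have "((3::nat)^(2*k))^D = 3^j0" unfolding j by (rule power_mult[symmetric])
          finally show ?thesis .
        qed
        ultimately show ?thesis by simp
      qed
      have tq: "n^t * n^q = n^D * n^j0"
      proof -
        have "t + q = D + j0" unfolding q_def D_def by simp
        hence "n^(t+q) = n^(D+j0)" by simp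
        thus ?thesis by (simp only: power_add)
      qed
      have "3^j0 * (n^t * (n^q * odd_dfact (n - q))) = 3^j0 * ((n^t * n^q) * odd_dfact (n - q))"
        by (simp only: mult.assoc)
      also have "\<dots> = 3^j0 * ((n^D * n^j0) * odd_dfact (n - (t+1+j0)))" unfolding tq by (simp only: q_def)
      also have "\<dots> = n^D * (3^j0 * n^j0 * odd_dfact (n - (t+1+j0)))" by (simp only: mult_ac)
      finally have "3^j0 * (n^t * (n^q * odd_dfact (n - q))) = n^D * (3^j0 * n^j0 * odd_dfact (n - (t+1+j0)))" .
      also have "\<dots> \<le> n^D * (2^j0 * odd_dfact (n - (t+1)))" using ps by simp
      also have "\<dots> = (n^D * 2^j0) * odd_dfact (n - (t+1))" by simp
      also have "\<dots> \<le> 3^j0 * odd_dfact (n - (t+1))" using pw by (rule mult_right_mono) simp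
      finally show ?thesis by simp
    qed
    show "\<exists>q. t < q \<and> 4*q+2 \<le> n \<and> n^t * (n^q * odd_dfact (n - q)) \<le> odd_dfact (n - Suc t) \<and>
     (q^(t+1)+1)*(q^t+1) \<le> 2*(n-t) - 1" using c1 c2 c3 c4 by blast
  qed
qed

theorem mainTheorem11:
  fixes t :: nat
  shows "\<exists>n0. \<forall>n \<ge> n0. \<forall>F G.
           F \<subseteq> near_perfect_matchings n \<longrightarrow> G \<subseteq> near_perfect_matchings n \<longrightarrow>
           t_cross_intersecting t F G \<longrightarrow>
           card F * card G \<le> (odd_dfact (n - t))^2"
proof -
  obtain n0 where H: "\<forall>n\<ge>n0. \<exists>q. t < q \<and> 4*q+2 \<le> n \<and> n^t * (n^q * odd_dfact (n - q)) \<le> odd_dfact (n - Suc t) \<and>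
     (q^(t+1)+1)*(q^t+1) \<le> 2*(n-t) - 1" using asymp_choice by blast
  show ?thesis
  proof (intro exI[of _ n0] allI impI)
    fix n F G assume n: "n0 \<le> n" and FM: "F \<subseteq> near_perfect_matchings n" and GM: "G \<subseteq> near_perfect_matchings n"
      and cr: "t_cross_intersecting t F G"
    obtain q where q: "t < q" "4*q+2 \<le> n" "n^t * (n^q * odd_dfact (n - q)) \<le> odd_dfact (n - Suc t)"
      "(q^(t+1)+1)*(q^t+1) \<le> 2*(n-t) - 1" using H n by blast
    show "card F * card G \<le> (odd_dfact (n - t))^2" by (rule main_fixed[OF q FM GM cr])
  qed
qed

end
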